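(* Let $H=(V,E)$ be a finite hypergraph with $E=\{e_1,\dots,e_{|E|}\}$, let $w:E\to\mathbb{Z}_2$ and $v\in V$, and define $\Lambda_v(|\psi_w\rangle)=|l_v(w_{e_1})\cdots l_v(w_{e_{|E|}})\rangle$, where $l_v(w_e)=\overline{w(e)}$ if $v\in e$ and $l_v(w_e)=w(e)$ otherwise. (i) If $|\psi_w\rangle\in\Pi$, then $\Lambda_v(|\psi_w\rangle)\in\Pi$. (ii) If $|\psi_w\rangle\in\mathcal{H}(E)\setminus\Pi$, then $\Lambda_v(|\psi_w\rangle)\in\mathcal{H}(E)\setminus\Pi$.
   Context: A hypergraph is $H=(V,E)$ with $V$ finite and $E\subset\mathcal{P}(V)$. For $p\in\mathbb{Z}_2$, $\overline{p}=p\oplus1$. For $w:E\to\mathbb{Z}_2$, $|\psi_w\rangle=|w(e_1)\cdots w(e_{|E|})\rangle$, and $\mathcal{H}(E)$ is the set of all such states. $w$ is a parity weight if there is $f:V\to\mathbb{Z}_2$ with $\overline{w(e)}=\bigoplus_{u\in e}f(u)$ for all $e\in E$; $\Pi=\{|\psi_w\rangle : w\text{ a parity weight}\}$. *)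

theory Defs
  imports Main "HOL-Library.Z2"
begin

text \<open>Z_2 is the two-element field bit; p xor 1 is p + 1.
 The edges E = {e_1,...,e_|E|} are enumerated by a distinct list es with set es = E.\<close>

definition parity_weight :: "'a set set \<Rightarrow> ('a set \<Rightarrow> bit) \<Rightarrow> bool" where
  "parity_weight E w \<longleftrightarrow> (\<exists>f :: 'a \<Rightarrow> bit. \<forall>e\<in>E. w e + 1 = (\<Sum>u\<in>e. f u))"

definition psi :: "'a set list \<Rightarrow> ('a set \<Rightarrow> bit) \<Rightarrow> bit list" where
  "psi es w = map w es"

definition Hstates :: "'a set list \<Rightarrow> bit list set" where
  "Hstates es = {psi es w | w. True}"

definition PiStates :: "'a set list \<Rightarrow> bit list set" where
  "PiStates es = {psi es w | w. parity_weight (set es) w}"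

definition Lambda :: "'a set list \<Rightarrow> 'a \<Rightarrow> bit list \<Rightarrow> bit list" where
  "Lambda es v \<psi> = map2 (\<lambda>e b. if v \<in> e then b + 1 else b) es \<psi>"

end

theory Submission
  imports Defs
begin

lemma psi_eq_iff: "psi es w1 = psi es w2 \<longleftrightarrow> (\<forall>e\<in>set es. w1 e = w2 e)"
  unfolding psi_def by (simp add: map_eq_conv)

lemma pw_cong: "(\<forall>e\<in>E. w1 e = w2 e) \<Longrightarrow> parity_weight E w1 = parity_weight E w2"
  unfolding parity_weight_def by auto

lemma Pi_iff: "psi es w \<in> PiStates es \<longleftrightarrow> parity_weight (set es) w"
proof
  assume "psi es w \<in> PiStates es"
  then obtain w' where "psi es w = psi es w'" "parity_weight (set es) w'"
    unfolding PiStates_def by auto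
  then show "parity_weight (set es) w" using pw_cong[of "set es" w w'] psi_eq_iff[of es w w'] by simp
qed (auto simp: PiStates_def)

lemma sum_flip:
  assumes "finite e"
  shows "(\<Sum>u\<in>e. (f(v := f v + 1)) u) = (\<Sum>u\<in>e. f u) + (if v \<in> e then 1 else 0)"
proof (cases "v \<in> e")
  case True
  let ?g = "f(v := f v + 1)"
  have a: "sum ?g e = ?g v + sum ?g (e-{v})" by (rule sum.remove[OF assms True])
  have b: "sum f e = f v + sum f (e-{v})" by (rule sum.remove[OF assms True])
  have c: "sum ?g (e-{v}) = sum f (e-{v})" by (rule sum.cong) auto
  show ?thesis using a b c True by (simp add: algebra_simps)
next
  case False
  have "sum (f(v := f v + 1)) e = sum f e" by (rule sum.cong) (use False in auto)
  then show ?thesis using False by simp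
qed

definition flipw :: "'a \<Rightarrow> ('a set \<Rightarrow> bit) \<Rightarrow> 'a set \<Rightarrow> bit" where
  "flipw v w e = (if v \<in> e then w e + 1 else w e)"

lemma Lambda_psi: "Lambda es v (psi es w) = psi es (flipw v w)"
  unfolding Lambda_def psi_def flipw_def by (induct es) auto

lemma flip_pw:
  assumes "\<forall>e\<in>E. finite e" "parity_weight E w"
  shows "parity_weight E (flipw v w)"
proof -
  obtain f where f: "\<forall>e\<in>E. w e + 1 = (\<Sum>u\<in>e. f u)"
    using assms(2) unfolding parity_weight_def by auto
  have "\<forall>e\<in>E. flipw v w e + 1 = (\<Sum>u\<in>e. (f(v := f v + 1)) u)"
  proof
    fix e assume e: "e \<in> E"
    have S: "(\<Sum>u\<in>e. (f(v := f v + 1)) u) = (\<Sum>u\<in>e. f u) + (if v \<in> e then 1 else 0)"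
      using assms(1) e by (intro sum_flip) blast
    have W: "w e + 1 = (\<Sum>u\<in>e. f u)" using f e by (rule bspec)
    show "flipw v w e + 1 = (\<Sum>u\<in>e. (f(v := f v + 1)) u)"
      unfolding S flipw_def W[symmetric] by simp
  qed
  then show ?thesis unfolding parity_weight_def by (rule exI[where x="f(v := f v + 1)"])
qed

lemma flip_flip: "flipw v (flipw v w) = w"
  unfolding flipw_def by (auto simp: fun_eq_iff)

theorem lemma5:
  fixes V :: "'a set" and E :: "'a set set" and es :: "'a set list"
    and w :: "'a set \<Rightarrow> bit" and v :: 'a
  assumes "finite V" and "E \<subseteq> Pow V"
    and "distinct es" and "set es = E"
    and "v \<in> V"
  shows "(psi es w \<in> PiStates es \<longrightarrow> Lambda es v (psi es w) \<in> PiStates es)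
       \<and> (psi es w \<in> Hstates es - PiStates es \<longrightarrow>
            Lambda es v (psi es w) \<in> Hstates es - PiStates es)"
proof -
  have fin: "\<forall>e\<in>set es. finite e"
  proof
    fix e assume "e \<in> set es"
    then have "e \<subseteq> V" using assms(2,4) by blast
    then show "finite e" using assms(1) by (rule finite_subset)
  qed
  have H: "psi es (flipw v w) \<in> Hstates es"
    unfolding Hstates_def by blast
  have P1: "parity_weight (set es) w \<Longrightarrow> parity_weight (set es) (flipw v w)"
    by (rule flip_pw[OF fin])
  have P2: "parity_weight (set es) (flipw v w) \<Longrightarrow> parity_weight (set es) w"
    using flip_pw[OF fin, of "flipw v w" v] unfolding flip_flip .
  show ?thesis
    unfolding Lambda_psi
    using H P1 P2 Pi_iff[of es w] Pi_iff[of es "flipw v w"] by blast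
qed

end
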